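(* Let $n\ge 4$ be even. Let the multiplicative group $\Gamma=\mathbb R_{>0}^n$ act on $\mathbb R_{>0}^{E_n}$ by $\lambda\cdot x=(\lambda_i\lambda_j x_{\{i,j\}})_{\{i,j\}\in E_n}$ for $\lambda\in\Gamma$, $x\in\mathbb R_{>0}^{E_n}$. Then every $\Gamma$-invariant subset of $\mathbb R_{>0}^{E_n}$ is fiber-invariant for the map $\varphi:\mathbb R_{>0}^{E_n}\to\mathbb R_{>0}^{\mathcal M_n}$, $\varphi(x)=(x_M)_{M\in\mathcal M_n}$, where $x_M=\prod_{e\in M}x_e$.
   Context: $E_n$ denotes the set of edges of the complete graph on vertex set $[n]=\{1,\dots,n\}$ (i.e. the 2-element subsets of $[n]$), and $\mathcal M_n$ denotes the set of perfect matchings of this complete graph. For a map $f:X\to Y$, a subset $D\subseteq X$ is fiber-invariant for $f$ if for every $y\in f(D)$ the whole fiber $f^{-1}(y)$ is contained in $D$. *)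

theory Defs
  imports Complex_Main "HOL-Library.FuncSet"
begin

definition edges :: "nat \<Rightarrow> nat set set" where
  "edges n = {e. e \<subseteq> {1..n} \<and> card e = 2}"

definition perfect_matchings :: "nat \<Rightarrow> nat set set set" where
  "perfect_matchings n = {M. M \<subseteq> edges n \<and> (\<forall>v\<in>{1..n}. \<exists>!e. e \<in> M \<and> v \<in> e)}"

definition pos_edge_space :: "nat \<Rightarrow> (nat set \<Rightarrow> real) set" where
  "pos_edge_space n = edges n \<rightarrow>\<^sub>E {0<..}"

definition Gamma :: "nat \<Rightarrow> (nat \<Rightarrow> real) set" where
  "Gamma n = {1..n} \<rightarrow>\<^sub>E {0<..}"

definition act :: "nat \<Rightarrow> (nat \<Rightarrow> real) \<Rightarrow> (nat set \<Rightarrow> real) \<Rightarrow> (nat set \<Rightarrow> real)" where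
  "act n lam x = (\<lambda>e\<in>edges n. (\<Prod>i\<in>e. lam i) * x e)"

definition Gamma_invariant :: "nat \<Rightarrow> (nat set \<Rightarrow> real) set \<Rightarrow> bool" where
  "Gamma_invariant n D \<longleftrightarrow> D \<subseteq> pos_edge_space n \<and>
     (\<forall>lam\<in>Gamma n. \<forall>x\<in>D. act n lam x \<in> D)"

definition phi :: "nat \<Rightarrow> (nat set \<Rightarrow> real) \<Rightarrow> (nat set set \<Rightarrow> real)" where
  "phi n x = (\<lambda>M\<in>perfect_matchings n. \<Prod>e\<in>M. x e)"

definition fiber_invariant :: "('a \<Rightarrow> 'b) \<Rightarrow> 'a set \<Rightarrow> 'a set \<Rightarrow> bool" where
  "fiber_invariant f X D \<longleftrightarrow> D \<subseteq> X \<and> (\<forall>y\<in>f ` D. {x\<in>X. f x = y} \<subseteq> D)"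

end

theory Submission
  imports Defs
begin

lemma pm_exists:
  "finite S \<Longrightarrow> even (card S) \<Longrightarrow>
   \<exists>M. M \<subseteq> {e. e \<subseteq> S \<and> card e = 2} \<and> (\<forall>v\<in>S. \<exists>!e. e \<in> M \<and> v \<in> e)"
proof (induction "card S" arbitrary: S rule: less_induct)
  case less
  show ?case
  proof (cases "S = {}")
    case True
    then show ?thesis by (rule_tac x="{}" in exI) simp
  next
    case False
    then obtain a where a: "a \<in> S" by blast
    have "card S \<noteq> 1" using less.prems(2) by (metis odd_one)
    moreover have "card S > 0" using False less.prems(1) by (simp add: card_gt_0_iff)
    ultimately have c2: "card S \<ge> 2" by linarith
    have "S - {a} \<noteq> {}"
    proof
      assume "S - {a} = {}"
      then have "S = {a}" using a by blast
      then show False using c2 by simp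
    qed
    then obtain b where b: "b \<in> S" "b \<noteq> a" by blast
    define T where "T = S - {a, b}"
    have sab: "{a,b} \<subseteq> S" using a b by blast
    have cT: "card T = card S - 2" unfolding T_def using sab b(2) less.prems(1)
      by (simp add: card_Diff_subset)
    have c1: "card T < card S" using cT c2 by linarith
    have fT: "finite T" using less.prems(1) T_def by simp
    have eT: "even (card T)" using cT c2 less.prems(2) by simp
    obtain M' where M': "M' \<subseteq> {e. e \<subseteq> T \<and> card e = 2}" "\<forall>v\<in>T. \<exists>!e. e \<in> M' \<and> v \<in> e"
      using less.hyps[OF c1 fT eT] by (elim exE conjE)
    show ?thesis
    proof (rule exI[of _ "insert {a,b} M'"], intro conjI ballI)
      show "insert {a, b} M' \<subseteq> {e. e \<subseteq> S \<and> card e = 2}"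
        using M'(1) sab b(2) T_def by auto
    next
      fix v assume v: "v \<in> S"
      show "\<exists>!e. e \<in> insert {a, b} M' \<and> v \<in> e"
      proof (cases "v \<in> {a,b}")
        case True
        have "\<forall>e\<in>M'. v \<notin> e" using M'(1) True T_def by blast
        then show ?thesis using True by (intro ex1I[of _ "{a,b}"]) auto
      next
        case False
        then have "v \<in> T" using v T_def by blast
        then have H: "\<exists>!e. e \<in> M' \<and> v \<in> e" using M'(2) by (rule bspec[rotated])
        have "\<And>e. (e \<in> insert {a,b} M' \<and> v \<in> e) = (e \<in> M' \<and> v \<in> e)" using False by blast
        then show ?thesis using H by simp
      qed
    qed
  qed
qed


lemma phi_eq:
  assumes "phi n x = phi n y" "M \<in> perfect_matchings n"
  shows "prod x M = prod y M"
  using fun_cong[OF assms(1), of M] assms(2) by (simp add: phi_def)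

lemma pos_val: "x \<in> pos_edge_space n \<Longrightarrow> e \<in> edges n \<Longrightarrow> x e > 0"
  unfolding pos_edge_space_def by auto

lemma edge2: "i \<in> {1..n} \<Longrightarrow> j \<in> {1..n} \<Longrightarrow> i \<noteq> j \<Longrightarrow> {i,j} \<in> edges n"
  unfolding edges_def by auto

lemma pm_ext:
  assumes M1: "M' \<subseteq> {e. e \<subseteq> {1..n} - {p,q,r,s} \<and> card e = 2}"
    and M2: "\<forall>v\<in>{1..n} - {p,q,r,s}. \<exists>!e. e \<in> M' \<and> v \<in> e"
    and pin: "p \<in> {1..n}" "q \<in> {1..n}" "r \<in> {1..n}" "s \<in> {1..n}" and d: "distinct [p,q,r,s]"
  shows "insert {p,q} (insert {r,s} M') \<in> perfect_matchings n"
proof -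
  have M'e: "M' \<subseteq> edges n" using M1 unfolding edges_def by auto
  have sub: "insert {p,q} (insert {r,s} M') \<subseteq> edges n"
    using M'e edge2[OF pin(1,2)] edge2[OF pin(3,4)] d by auto
  have nn: "\<And>e. e \<in> M' \<Longrightarrow> p \<notin> e \<and> q \<notin> e \<and> r \<notin> e \<and> s \<notin> e" using M1 by blast
  have "\<exists>!e. e \<in> insert {p,q} (insert {r,s} M') \<and> v \<in> e" if v: "v \<in> {1..n}" for v
  proof (cases "v \<in> {p,q,r,s}")
    case True
    have neq: "{p,q} \<noteq> {r,s}" using d by (auto simp: doubleton_eq_iff)
    from True consider "v = p" | "v = q" | "v = r" | "v = s" by blast
    then show ?thesis
    proof cases
      case 1 then show ?thesis using nn d by (intro ex1I[of _ "{p,q}"]) auto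
    next
      case 2 then show ?thesis using nn d by (intro ex1I[of _ "{p,q}"]) auto
    next
      case 3 then show ?thesis using nn d by (intro ex1I[of _ "{r,s}"]) auto
    next
      case 4 then show ?thesis using nn d by (intro ex1I[of _ "{r,s}"]) auto
    qed
  next
    case False
    then have "v \<in> {1..n} - {p,q,r,s}" using v by blast
    then have H: "\<exists>!e. e \<in> M' \<and> v \<in> e" using M2 by (rule bspec[rotated])
    have "\<And>e. (e \<in> insert {p,q} (insert {r,s} M') \<and> v \<in> e) = (e \<in> M' \<and> v \<in> e)" using False by blast
    then show ?thesis using H by simp
  qed
  then show ?thesis using sub unfolding perfect_matchings_def by auto
qed

lemma pr_ext:
  assumes M1: "M' \<subseteq> {e. e \<subseteq> {1..n} - {p,q,r,s} \<and> card e = 2}" and fM: "finite M'"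
    and d: "distinct [p,q,r,s]"
  shows "prod z (insert {p,q} (insert {r,s} M')) = z {p,q} * z {r,s} * prod z M'"
proof -
  have nn: "\<And>e. e \<in> M' \<Longrightarrow> p \<notin> e \<and> r \<notin> e" using M1 by blast
  have "{p,q} \<notin> insert {r,s} M'" using nn d by (auto simp: doubleton_eq_iff)
  moreover have "{r,s} \<notin> M'" using nn by auto
  ultimately show ?thesis using fM by (simp add: mult.assoc)
qed

lemma Q:
  assumes x: "x \<in> pos_edge_space n" and y: "y \<in> pos_edge_space n" and eq: "phi n x = phi n y"
    and ev: "even n"
    and in_: "i \<in> {1..n}" "j \<in> {1..n}" "k \<in> {1..n}" "l \<in> {1..n}"
    and d: "distinct [i,j,k,l]"
  shows "ln (y {i,j}) - ln (x {i,j}) + (ln (y {k,l}) - ln (x {k,l}))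
       = ln (y {i,k}) - ln (x {i,k}) + (ln (y {j,l}) - ln (x {j,l}))"
proof -
  define S where "S = {1..n} - {i,j,k,l}"
  have c4: "card {i,j,k,l} = 4" using d by auto
  have sub4: "{i,j,k,l} \<subseteq> {1..n}" using in_ by auto
  have cS: "card S = n - 4" unfolding S_def using sub4 c4 by (simp add: card_Diff_subset)
  have "n \<ge> 4" using c4 card_mono[OF _ sub4] by auto
  then have evS: "even (card S)" using cS ev by auto
  have fS: "finite S" unfolding S_def by auto
  obtain M' where M': "M' \<subseteq> {e. e \<subseteq> S \<and> card e = 2}" "\<forall>v\<in>S. \<exists>!e. e \<in> M' \<and> v \<in> e"
    using pm_exists[OF fS evS] by (elim exE conjE)
  have fM': "finite M'"
  proof (rule finite_subset)
    show "M' \<subseteq> Pow S" using M'(1) by auto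
  qed (use fS in auto)
  have S2: "S = {1..n} - {i,k,j,l}" unfolding S_def by (simp add: insert_commute)
  have M1: "M' \<subseteq> {e. e \<subseteq> {1..n} - {i,j,k,l} \<and> card e = 2}" "\<forall>v\<in>{1..n} - {i,j,k,l}. \<exists>!e. e \<in> M' \<and> v \<in> e"
    using M' unfolding S_def .
  have M2: "M' \<subseteq> {e. e \<subseteq> {1..n} - {i,k,j,l} \<and> card e = 2}" "\<forall>v\<in>{1..n} - {i,k,j,l}. \<exists>!e. e \<in> M' \<and> v \<in> e"
    using M' unfolding S2 .
  have d2: "distinct [i,k,j,l]" using d by auto
  have e1: "x {i,j} * x {k,l} * prod x M' = y {i,j} * y {k,l} * prod y M'"
    using phi_eq[OF eq pm_ext[OF M1 in_ d]] unfolding pr_ext[OF M1(1) fM' d] .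
  have e2: "x {i,k} * x {j,l} * prod x M' = y {i,k} * y {j,l} * prod y M'"
    using phi_eq[OF eq pm_ext[OF M2 in_(1,3,2,4) d2]] unfolding pr_ext[OF M2(1) fM' d2] .
  have M'e: "M' \<subseteq> edges n" using M'(1) unfolding S_def edges_def by auto
  have px: "prod x M' > 0" "prod y M' > 0"
    using M'e pos_val[OF x] pos_val[OF y] by (auto intro!: prod_pos)
  have E: "{i,j} \<in> edges n" "{k,l} \<in> edges n" "{i,k} \<in> edges n" "{j,l} \<in> edges n"
    using edge2 in_ d by auto
  have ps: "x {i,j} > 0" "x {k,l} > 0" "x {i,k} > 0" "x {j,l} > 0"
     "y {i,j} > 0" "y {k,l} > 0" "y {i,k} > 0" "y {j,l} > 0"
    using E pos_val[OF x] pos_val[OF y] by auto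
  have l1: "ln (x {i,j}) + ln (x {k,l}) + ln (prod x M') = ln (y {i,j}) + ln (y {k,l}) + ln (prod y M')"
    using arg_cong[OF e1, of ln] ps px by (simp add: ln_mult)
  have l2: "ln (x {i,k}) + ln (x {j,l}) + ln (prod x M') = ln (y {i,k}) + ln (y {j,l}) + ln (prod y M')"
    using arg_cong[OF e2, of ln] ps px by (simp add: ln_mult)
  show ?thesis using l1 l2 by linarith
qed

lemma main:
  assumes x: "x \<in> pos_edge_space n" and y: "y \<in> pos_edge_space n" and eq: "phi n x = phi n y"
    and ev: "even n" and n4: "n \<ge> 4"
  shows "\<exists>lam\<in>Gamma n. act n lam x = y"
proof -
  define W where "W i j = ln (y {i,j}) - ln (x {i,j})" for i j
  have Wsym: "W i j = W j i" for i j unfolding W_def by (simp add: insert_commute)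
  have Q': "W i j + W k l = W i k + W j l"
    if "i \<in> {1..n}" "j \<in> {1..n}" "k \<in> {1..n}" "l \<in> {1..n}" "distinct [i,j,k,l]" for i j k l
    using Q[OF x y eq ev that] unfolding W_def by simp
  define A where "A i p q = (W i p + W i q - W p q) / 2" for i p q
  have swap: "A i p q = A i q p" for i p q unfolding A_def using Wsym by simp
  have chg: "A i p q = A i p r"
    if "i \<in> {1..n}" "p \<in> {1..n}" "q \<in> {1..n}" "r \<in> {1..n}" "distinct [i,p,q]" "distinct [i,p,r]" for i p q r
  proof (cases "q = r")
    case False
    then have "W i q + W r p = W i r + W q p" using Q'[of i q r p] that by auto
    then show ?thesis unfolding A_def using Wsym[of p q] Wsym[of p r] by simp
  qed simp
  have indep: "A i p q = A i p' q'"
    if "i \<in> {1..n}" "p \<in> {1..n}" "q \<in> {1..n}" "p' \<in> {1..n}" "q' \<in> {1..n}"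
       "distinct [i,p,q]" "distinct [i,p',q']" for i p q p' q'
  proof (cases "p' = q")
    case False
    have "A i p q = A i q p" by (rule swap)
    also have "\<dots> = A i q p'" using chg[of i q p p'] that False by auto
    also have "\<dots> = A i p' q" by (rule swap)
    also have "\<dots> = A i p' q'" using chg[of i p' q q'] that False by auto
    finally show ?thesis .
  next
    case True
    have "A i p q = A i q p" by (rule swap)
    also have "\<dots> = A i q q'" using chg[of i q p q'] that True by auto
    finally show ?thesis using True by simp
  qed
  define a where "a i = (if i = 1 then A 1 2 3 else if i = 2 then A 2 1 3 else A i 1 2)" for i
  have aA: "a i = A i p q"
    if "i \<in> {1..n}" "p \<in> {1..n}" "q \<in> {1..n}" "distinct [i,p,q]" for i p q
  proof -
    have n123: "1 \<in> {1..n}" "2 \<in> {1..n}" "3 \<in> {1..n}" using n4 by auto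
    show ?thesis
    proof (cases "i = 1")
      case True
      then show ?thesis unfolding a_def using indep[OF that(1) n123(2,3) that(2,3)] that(4) by simp
    next
      case F1: False
      show ?thesis
      proof (cases "i = 2")
        case True
        then show ?thesis unfolding a_def using indep[OF that(1) n123(1,3) that(2,3)] that(4) by simp
      next
        case False
        then show ?thesis unfolding a_def using indep[OF that(1) n123(1,2) that(2,3)] that(4) F1 by simp
      qed
    qed
  qed
  have Wa: "W i j = a i + a j" if "i \<in> {1..n}" "j \<in> {1..n}" "i \<noteq> j" for i j
  proof -
    have "card ({1..n} - {i,j}) \<ge> 2" using that n4 by (subst card_Diff_subset) auto
    then obtain k where k: "k \<in> {1..n}" "k \<noteq> i" "k \<noteq> j"
      by (metis Diff_iff card.empty ex_in_conv insertCI not_numeral_le_zero)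
    have "a i = A i j k" "a j = A j i k" using aA that k by auto
    then show ?thesis unfolding A_def using Wsym[of j i] Wsym[of k i] Wsym[of k j] by simp
  qed
  define lam where "lam = restrict (\<lambda>i. exp (a i)) {1..n}"
  have "lam \<in> Gamma n" unfolding lam_def Gamma_def by auto
  moreover have "act n lam x = y"
  proof
    fix e
    show "act n lam x e = y e"
    proof (cases "e \<in> edges n")
      case True
      then obtain i j where e: "e = {i,j}" "i \<noteq> j" "i \<in> {1..n}" "j \<in> {1..n}"
        unfolding edges_def by (auto simp: card_2_iff)
      have "(\<Prod>i\<in>e. lam i) = exp (W i j)"
        using e Wa[of i j] by (simp add: lam_def exp_add)
      moreover have "exp (W i j) * x e = y e"
        using pos_val[OF x True] pos_val[OF y True] e unfolding W_def
        by (simp add: exp_diff)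
      ultimately show ?thesis using True by (simp add: act_def)
    next
      case False
      then show ?thesis using y unfolding act_def pos_edge_space_def PiE_def extensional_def by auto
    qed
  qed
  ultimately show ?thesis by blast
qed

theorem theorem4p4:
  fixes n :: nat and D :: "(nat set \<Rightarrow> real) set"
  assumes "even n" and "n \<ge> 4"
    and "D \<subseteq> pos_edge_space n" and "Gamma_invariant n D"
  shows "fiber_invariant (phi n) (pos_edge_space n) D"
  unfolding fiber_invariant_def
proof (rule conjI)
  show "D \<subseteq> pos_edge_space n" using assms(3) .
next
  show "\<forall>y\<in>phi n ` D. {x \<in> pos_edge_space n. phi n x = y} \<subseteq> D"
  proof (intro ballI subsetI)
  fix z w assume z: "z \<in> phi n ` D" and w: "w \<in> {x \<in> pos_edge_space n. phi n x = z}"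
  then obtain x where xD: "x \<in> D" and zx: "z = phi n x" by auto
  have xp: "x \<in> pos_edge_space n" using xD assms(3) by auto
  have wp: "w \<in> pos_edge_space n" and eqw: "phi n x = phi n w" using w zx by auto
  obtain lam where "lam \<in> Gamma n" "act n lam x = w" using main[OF xp wp eqw assms(1,2)] by blast
  then show "w \<in> D" using assms(4) xD unfolding Gamma_invariant_def by blast
  qed
qed

end
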